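(* Assume the setup below and let $\boldsymbol{\lambda}\in\mathcal{P}(l,n)$. There exists a unique $l$-tuple $\tilde{\mathbf{C}}=(\tilde{C}^0,\dots,\tilde{C}^{l-1})$ of strictly decreasing sequences of integers such that (ii) $\tilde{C}_{[t]}=C_{[t]}(\boldsymbol{\lambda})$ as multisets for all $0\le t\le d$; (iii) $\tilde{C}^p\subseteq\tilde{C}^{p-1}$ (as sets) for every $p\in J$ with $p\ne0$; (iv) if $0\in I_0$, then $S^{-1}\tilde{C}^0\subseteq\tilde{C}^{l-1}$. Here $\tilde{C}_{[t]}$ is formed from $\tilde{\mathbf{C}}$ by the same recipe as $C_{[t]}(\boldsymbol{\lambda})$ is formed from $\mathbf{C}(\boldsymbol{\lambda})$.
   Context: Fix positive integers $l,n$. Partitions, Young diagrams, contents, $\mathcal{P}(l,n)$ ($l$-multipartitions of $n$) are as usual. For $r\in\mathbb{Z}$, $\beta^r(\lambda)=(\lambda_i+r+1-i)_{i\ge1}$. For a strictly decreasing integer sequence $C$ and $i\in\mathbb{Z}$, $S^iC=(C_1+i,C_2+i,\dots)$. Parameters: $H_1,\dots,H_{l-1}\in\mathbb{Q}$, $H_0=-(H_1+\dots+H_{l-1})$, $d$ a positive integer with $dH_i\in\mathbb{Z}$. Put $\theta=(1+H_0,H_1,\dots,H_{l-1})$. Let $S_l$ be the permutations of $\{0,\dots,l-1\}$, generated by $s_i$ ($1\le i\le l-1$) transposing $i-1,i$, acting on $\mathbb{Q}^l$ by: $s_i\cdot\theta$ has entry $\theta_{i-1}+\theta_i$ in position $i-1$,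 $-\theta_i$ in position $i$, $\theta_i+\theta_{i+1}$ in position $i+1$, otherwise unchanged (indices mod $l$). Let $R\subset\mathbb{Z}^l$ be generated by $\alpha_i=-e_{i-1}+2e_i-e_{i+1}$ (indices mod $l$), $\tilde{S}_l=R\rtimes S_l$ acting on $\{\theta\in\mathbb{Q}^l:\sum\theta_i=1\}$ with $R$ by translations, $\mathbb{Z}^l_0$ the integer vectors of coordinate sum $0$, and $\phi(\mathbf{r})=\sum_j(r_{j-1}-r_j)e_j$ (indices mod $l$). Fix $w_\theta=\phi(\mathbf{r})w\in\tilde{S}_l$ ($\mathbf{r}\in\mathbb{Z}^l_0$, $w\in S_l$) with $\boldsymbol{\epsilon}=w_\theta\cdot\theta$ satisfying $0\le\varepsilon_i\le1$; let $J=\{j:\varepsilon_j=0\}$; then $d\boldsymbol{\epsilon}\in\mathbb{Z}^l$. Let $m_i(\mathbf{c})=c_0+\dots+c_i$ and $I_t=\{p:m_p(d\boldsymbol{\epsilon})=t\}$ for $0\le t\le d$. For $\boldsymbol{\lambda}\in\mathcal{P}(l,n)$ put $C^p(\boldsymbol{\lambda})=\beta^{r_p}(\lambda^{(w^{-1}(p))})$ and $\mathbf{C}(\boldsymbol{\lambda})=(C^0,\dots,C^{l-1})$. For $1\le t\le d-1$ let $C_{[t]}$ be the multiset union $\biguplus_{p\in I_t}C^p$, and let $C_{[0]}=C_{[d]}$ be the multiset union $\biguplus_{p\in I_0}S^{-1}C^p\uplus\biguplus_{p\in I_d}C^p$. *)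

theory Defs
  imports Complex_Main "HOL-Combinatorics.Transposition"
begin

(* Partitions: \<lambda> :: nat \<Rightarrow> nat, where \<lambda> i is the (i+1)-th part \<lambda>_(i+1). *)
definition is_partition :: "(nat \<Rightarrow> nat) \<Rightarrow> bool" where
  "is_partition la \<longleftrightarrow> (\<forall>i. la (Suc i) \<le> la i) \<and> finite {i. la i \<noteq> 0}"

definition partition_size :: "(nat \<Rightarrow> nat) \<Rightarrow> nat" where
  "partition_size la = (\<Sum>i\<in>{i. la i \<noteq> 0}. la i)"

definition multipartition :: "nat \<Rightarrow> nat \<Rightarrow> (nat \<Rightarrow> nat \<Rightarrow> nat) \<Rightarrow> bool" where
  "multipartition l n la \<longleftrightarrow> (\<forall>p<l. is_partition (la p)) \<and> (\<Sum>p<l. partition_size (la p)) = n"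

(* beta^r(\<lambda>), 0-indexed: entry i (i.e. the (i+1)-th) is \<lambda>_(i+1) + r + 1 - (i+1) *)
definition beta :: "int \<Rightarrow> (nat \<Rightarrow> nat) \<Rightarrow> nat \<Rightarrow> int" where
  "beta r la i = int (la i) + r - int i"

definition strict_decr :: "(nat \<Rightarrow> int) \<Rightarrow> bool" where
  "strict_decr C \<longleftrightarrow> (\<forall>i. C (Suc i) < C i)"

definition shiftS :: "int \<Rightarrow> (nat \<Rightarrow> int) \<Rightarrow> nat \<Rightarrow> int" where
  "shiftS k C i = C i + k"

(* theta = (1 + H_0, H_1, ..., H_{l-1}), H_0 = -(H_1+...+H_{l-1}); zero outside {0..<l} *)
definition theta :: "nat \<Rightarrow> (nat \<Rightarrow> rat) \<Rightarrow> nat \<Rightarrow> rat" where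
  "theta l H j = (if j = 0 then 1 - (\<Sum>i\<in>{1..<l}. H i) else if j < l then H j else 0)"

definition alpha :: "nat \<Rightarrow> nat \<Rightarrow> nat \<Rightarrow> rat" where
  "alpha l i j = (if j = i mod l then 2 else 0) - (if j = (i + l - 1) mod l then 1 else 0)
                 - (if j = (i + 1) mod l then 1 else 0)"

definition sgen :: "nat \<Rightarrow> nat \<Rightarrow> (nat \<Rightarrow> rat) \<Rightarrow> nat \<Rightarrow> rat" where
  "sgen l i th j = (if j < l then th j - th i * alpha l i j else th j)"

(* The action of S_l generated by the s_i: Sact l w th th' means w . th = th' *)
inductive Sact :: "nat \<Rightarrow> (nat \<Rightarrow> nat) \<Rightarrow> (nat \<Rightarrow> rat) \<Rightarrow> (nat \<Rightarrow> rat) \<Rightarrow> bool"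
  for l :: nat where
  Sact_id: "Sact l id th th"
| Sact_gen: "Sact l w th th' \<Longrightarrow> 1 \<le> i \<Longrightarrow> i < l \<Longrightarrow>
     Sact l (transpose (i - 1) i \<circ> w) th (sgen l i th')"

definition phi :: "nat \<Rightarrow> (nat \<Rightarrow> int) \<Rightarrow> nat \<Rightarrow> int" where
  "phi l r j = (if j < l then r ((j + l - 1) mod l) - r j else 0)"

definition Iset :: "nat \<Rightarrow> nat \<Rightarrow> (nat \<Rightarrow> rat) \<Rightarrow> nat \<Rightarrow> nat set" where
  "Iset l d eps t = {p. p < l \<and> of_nat d * (\<Sum>i\<le>p. eps i) = of_nat t}"

definition Jset :: "nat \<Rightarrow> (nat \<Rightarrow> rat) \<Rightarrow> nat set" where
  "Jset l eps = {j. j < l \<and> eps j = 0}"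

(* Multiset union of strictly decreasing (hence injective) sequences, as multiplicity
   function int \<Rightarrow> nat.  C_[t] for 1 \<le> t \<le> d-1, and C_[0] = C_[d]. *)
definition Cbracket :: "nat \<Rightarrow> nat \<Rightarrow> (nat \<Rightarrow> rat) \<Rightarrow> (nat \<Rightarrow> nat \<Rightarrow> int) \<Rightarrow> nat \<Rightarrow> int \<Rightarrow> nat" where
  "Cbracket l d eps C t x =
     (if 1 \<le> t \<and> t \<le> d - 1 then card {p \<in> Iset l d eps t. x \<in> range (C p)}
      else card {p \<in> Iset l d eps 0. x \<in> range (shiftS (-1) (C p))}
         + card {p \<in> Iset l d eps d. x \<in> range (C p)})"

end

theory Submission
  imports Defs "HOL-Library.Infinite_Set"
begin


lemma sd_card_above:
  assumes "strict_decr A"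
  shows "card {y\<in>range A. y > A i} = i"
proof -
  have sm: "\<And>a b. a < b \<Longrightarrow> A b < A a"
  proof -
    fix a b :: nat assume "a < b" thus "A b < A a"
      by (induction b) (use assms in \<open>auto simp: strict_decr_def less_Suc_eq intro: less_trans\<close>)
  qed
  have iff: "\<And>j. A j > A i \<longleftrightarrow> j < i"
    using sm by (metis less_asym linorder_neqE_nat)
  have inj: "inj A" by (metis sm linorder_neqE_nat order_less_irrefl injI)
  have "{y\<in>range A. y > A i} = A ` {..<i}" using iff by auto
  thus ?thesis using inj by (simp add: card_image inj_on_subset)
qed

lemma sd_unique:
  assumes "strict_decr A" "strict_decr B" "range A = range B"
  shows "A = B"
proof
  fix i
  show "A i = B i"
  proof (rule ccontr)
    assume ne: "A i \<noteq> B i"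
    let ?R = "range A"
    have ca: "card {y\<in>?R. y > A i} = i" using sd_card_above[OF assms(1)] .
    have cb: "card {y\<in>?R. y > B i} = i" using sd_card_above[OF assms(2)] assms(3) by simp
    have fin: "\<And>z. finite {y\<in>?R. y > z}"
    proof -
      fix z
      have "{y\<in>?R. y > z} \<subseteq> {z<..A 0}"
      proof
        fix y assume "y \<in> {y\<in>?R. y > z}"
        then obtain j where "y = A j" "y > z" by auto
        moreover have "A j \<le> A 0"
          by (induction j) (use assms(1) in \<open>auto simp: strict_decr_def intro: order.trans less_imp_le\<close>)
        ultimately show "y \<in> {z<..A 0}" by auto
      qed
      thus "finite {y\<in>?R. y > z}" by (rule finite_subset) simp
    qed
    have Bi: "B i \<in> ?R" using assms(3) by auto
    have Ai: "A i \<in> ?R" by auto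
    show False
    proof (cases "A i < B i")
      case True
      have "{y\<in>?R. y > B i} \<subset> {y\<in>?R. y > A i}" using True Bi by auto
      from psubset_card_mono[OF fin this] ca cb show False by simp
    next
      case False
      hence "B i < A i" using ne by simp
      have "{y\<in>?R. y > A i} \<subset> {y\<in>?R. y > B i}" using \<open>B i < A i\<close> Ai by auto
      from psubset_card_mono[OF fin this] ca cb show False by simp
    qed
  qed
qed

lemma sd_exists:
  fixes R :: "int set"
  assumes "infinite R" "\<forall>x\<in>R. x \<le> b"
  shows "\<exists>A. strict_decr A \<and> range A = R"
proof -
  define N where "N = (\<lambda>x. nat (b - x)) ` R"
  have inj: "inj_on (\<lambda>x. nat (b - x)) R"
  proof (rule inj_onI)
    fix x y assume "x \<in> R" "y \<in> R" "nat (b - x) = nat (b - y)"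
    hence "int (nat (b - x)) = int (nat (b - y))" by simp
    moreover have "x \<le> b" "y \<le> b" using assms(2) \<open>x \<in> R\<close> \<open>y \<in> R\<close> by auto
    ultimately show "x = y" by simp
  qed
  have infN: "infinite N" unfolding N_def using assms(1) inj finite_imageD by blast
  define A where "A = (\<lambda>n. b - int (enumerate N n))"
  have "strict_decr A" unfolding strict_decr_def A_def
    using strict_mono_enumerate[OF infN] by (simp add: strict_mono_def)
  moreover have "range A = R"
  proof -
    have "range A = (\<lambda>k. b - int k) ` range (enumerate N)" unfolding A_def by auto
    also have "\<dots> = (\<lambda>k. b - int k) ` N" using range_enumerate[OF infN] by simp
    also have "\<dots> = R" unfolding N_def image_image using assms(2)
      by (auto simp: image_iff)
    finally show ?thesis .
  qed
  ultimately show ?thesis by blast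
qed

lemma rank_count:
  fixes f :: "'a \<Rightarrow> nat"
  assumes fin: "finite S" and inj: "inj_on f S" and k: "k \<le> card S"
  shows "card {p\<in>S. card {q\<in>S. f q \<le> f p} \<le> k} = k"
proof -
  define rk where "rk p = card {q\<in>S. f q \<le> f p}" for p
  have lt: "rk q < rk p" if "q \<in> S" "p \<in> S" "f q < f p" for p q
  proof -
    have "{q'\<in>S. f q' \<le> f q} \<subseteq> {q'\<in>S. f q' \<le> f p}" using that by auto
    moreover have "p \<notin> {q'\<in>S. f q' \<le> f q}" using that by auto
    ultimately have "{q'\<in>S. f q' \<le> f q} \<subset> {q'\<in>S. f q' \<le> f p}" using that by blast
    thus ?thesis unfolding rk_def by (rule psubset_card_mono[rotated]) (use fin in auto)
  qed
  have injr: "inj_on rk S"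
  proof (rule inj_onI)
    fix p q assume "p \<in> S" "q \<in> S" "rk p = rk q"
    thus "p = q" using lt inj by (metis inj_onD linorder_neqE_nat order_less_irrefl)
  qed
  have sub: "rk ` S \<subseteq> {1..card S}"
  proof
    fix y assume "y \<in> rk ` S"
    then obtain p where p: "p \<in> S" "y = rk p" by auto
    have "p \<in> {q\<in>S. f q \<le> f p}" using p by auto
    hence "rk p \<ge> 1" unfolding rk_def using fin by (metis (no_types, lifting) One_nat_def Suc_leI card_gt_0_iff empty_iff finite_subset mem_Collect_eq subsetI)
    moreover have "rk p \<le> card S" unfolding rk_def by (rule card_mono[OF fin]) auto
    ultimately show "y \<in> {1..card S}" using p by auto
  qed
  have im: "rk ` S = {1..card S}"
    by (rule card_subset_eq) (use sub card_image[OF injr] in auto)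
  have "card {p\<in>S. rk p \<le> k} = card (rk ` {p\<in>S. rk p \<le> k})"
    by (rule card_image[symmetric]) (rule inj_on_subset[OF injr], auto)
  also have "rk ` {p\<in>S. rk p \<le> k} = {1..k}" using im k by (auto; force)
  finally show ?thesis unfolding rk_def by simp
qed

lemma chain_char:
  fixes f :: "'a \<Rightarrow> nat"
  assumes fin: "finite S" and inj: "inj_on f S" and p: "p \<in> S"
    and ch: "\<forall>p\<in>S. \<forall>q\<in>S. f q \<le> f p \<longrightarrow> T p \<subseteq> T q"
  shows "T p = {x. card {q\<in>S. f q \<le> f p} \<le> card {q\<in>S. x \<in> T q}}"
proof (intro set_eqI iffI)
  fix x assume x: "x \<in> T p"
  have "{q\<in>S. f q \<le> f p} \<subseteq> {q\<in>S. x \<in> T q}" using ch p x by blast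
  thus "x \<in> {x. card {q\<in>S. f q \<le> f p} \<le> card {q\<in>S. x \<in> T q}}"
    using card_mono[of "{q\<in>S. x \<in> T q}"] fin by auto
next
  fix x assume x: "x \<in> {x. card {q\<in>S. f q \<le> f p} \<le> card {q\<in>S. x \<in> T q}}"
  show "x \<in> T p"
  proof (rule ccontr)
    assume nx: "x \<notin> T p"
    have "{q\<in>S. x \<in> T q} \<subseteq> {q\<in>S. f q < f p}"
    proof
      fix q assume q: "q \<in> {q\<in>S. x \<in> T q}"
      have "\<not> f p \<le> f q" using ch p q nx by blast
      thus "q \<in> {q\<in>S. f q < f p}" using q by auto
    qed
    moreover have "{q\<in>S. f q < f p} \<subset> {q\<in>S. f q \<le> f p}" using p by auto
    ultimately have "{q\<in>S. x \<in> T q} \<subset> {q\<in>S. f q \<le> f p}" by blast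
    hence "card {q\<in>S. x \<in> T q} < card {q\<in>S. f q \<le> f p}"
      by (rule psubset_card_mono[rotated]) (use fin in auto)
    thus False using x by simp
  qed
qed



lemma alpha_sum: "1 \<le> i \<Longrightarrow> i < l \<Longrightarrow> (\<Sum>j<l. alpha l i j) = 0"
  unfolding alpha_def by (simp add: sum_subtractf)

lemma alpha_int: "alpha l i j \<in> \<int>"
  unfolding alpha_def by (intro Ints_diff) auto

lemma sact_inv:
  assumes "Sact l w th th'" "\<forall>j<l. of_nat d * th j \<in> \<int>"
  shows "(\<forall>j<l. of_nat d * th' j \<in> \<int>) \<and> (\<Sum>j<l. th' j) = (\<Sum>j<l. th j) \<and> bij w \<and> (\<forall>j\<ge>l. w j = j)"
  using assms
proof (induction rule: Sact.induct)
  case (Sact_id th) then show ?case by (simp add: bij_id[unfolded id_def])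
next
  case (Sact_gen w th th' i)
  have "\<forall>j<l. of_nat d * sgen l i th' j \<in> \<int>"
  proof (intro allI impI)
    fix j assume j: "j < l"
    have "of_nat d * sgen l i th' j = of_nat d * th' j - (of_nat d * th' i) * alpha l i j"
      using j by (simp add: sgen_def algebra_simps)
    also have "\<dots> \<in> \<int>"
      by (rule Ints_diff[OF _ Ints_mult[OF _ alpha_int]]) (use Sact_gen j in auto)
    finally show "of_nat d * sgen l i th' j \<in> \<int>" .
  qed
  moreover have "(\<Sum>j<l. sgen l i th' j) = (\<Sum>j<l. th' j)"
  proof -
    have "(\<Sum>j<l. sgen l i th' j) = (\<Sum>j<l. th' j - th' i * alpha l i j)"
      by (rule sum.cong) (auto simp: sgen_def)
    also have "\<dots> = (\<Sum>j<l. th' j) - th' i * (\<Sum>j<l. alpha l i j)"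
      by (simp add: sum_subtractf sum_distrib_left)
    finally show ?thesis using alpha_sum Sact_gen by simp
  qed
  moreover have "bij (transpose (i - 1) i \<circ> w)" using Sact_gen by (simp add: bij_comp)
  moreover have "\<forall>j\<ge>l. (transpose (i - 1) i \<circ> w) j = j" using Sact_gen by auto
  ultimately show ?case using Sact_gen by (simp only: o_def)
qed

lemma part_le0: "is_partition la \<Longrightarrow> la i \<le> la 0"
  by (induction i) (auto simp: is_partition_def intro: order.trans)

lemma part_ev0: "is_partition la \<Longrightarrow> \<exists>N. \<forall>i\<ge>N. la i = 0"
proof -
  assume "is_partition la"
  then obtain m where "\<forall>n\<in>{i. la i \<noteq> 0}. n \<le> m" unfolding is_partition_def
    using finite_nat_set_iff_bounded_le by blast
  hence "\<forall>i\<ge>Suc m. la i = 0" by force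
  thus ?thesis by blast
qed



theorem mainTheorem4:
  fixes l n d :: nat and H :: "nat \<Rightarrow> rat" and r :: "nat \<Rightarrow> int"
    and w :: "nat \<Rightarrow> nat" and thw :: "nat \<Rightarrow> rat" and la :: "nat \<Rightarrow> nat \<Rightarrow> nat"
  assumes l_pos: "0 < l" and n_pos: "0 < n" and d_pos: "0 < d"
    and dH: "\<forall>i\<in>{1..<l}. of_nat d * H i \<in> \<int>"
    and r_sum: "(\<Sum>j<l. r j) = 0"
    and w_act: "Sact l w (theta l H) thw"
    and eps_bounds: "\<forall>j<l. 0 \<le> of_int (phi l r j) + thw j \<and> of_int (phi l r j) + thw j \<le> 1"
    and la_mp: "multipartition l n la"
  shows "let eps = (\<lambda>j. of_int (phi l r j) + thw j);
             C = (\<lambda>p. beta (r p) (la (inv w p)))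
         in \<exists>!Ct :: (nat \<Rightarrow> int) list.
              length Ct = l \<and> (\<forall>p<l. strict_decr (Ct ! p))
              \<and> (\<forall>t\<le>d. Cbracket l d eps (\<lambda>p. Ct ! p) t = Cbracket l d eps C t)
              \<and> (\<forall>p\<in>Jset l eps. p \<noteq> 0 \<longrightarrow> range (Ct ! p) \<subseteq> range (Ct ! (p - 1)))
              \<and> (0 \<in> Iset l d eps 0 \<longrightarrow> range (shiftS (-1) (Ct ! 0)) \<subseteq> range (Ct ! (l - 1)))"
proof -
  define eps where "eps = (\<lambda>j. of_int (phi l r j) + thw j :: rat)"
  define C where "C = (\<lambda>p. beta (r p) (la (inv w p)))"
  have theta_int: "\<forall>j<l. of_nat d * theta l H j \<in> \<int>"
  proof (intro allI impI)
    fix j assume j: "j < l"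
    show "of_nat d * theta l H j \<in> \<int>"
    proof (cases "j = 0")
      case True
      have "of_nat d * theta l H j = of_nat d - (\<Sum>i\<in>{1..<l}. of_nat d * H i)"
        using True by (simp add: theta_def algebra_simps sum_distrib_left)
      also have "\<dots> \<in> \<int>" using dH by (intro Ints_diff Ints_sum) auto
      finally show ?thesis .
    next
      case False thus ?thesis using j dH by (simp add: theta_def)
    qed
  qed
  have theta_sum: "(\<Sum>j<l. theta l H j) = 1"
  proof -
    have "{..<l} = insert 0 {1..<l}" using l_pos by auto
    hence "(\<Sum>j<l. theta l H j) = theta l H 0 + (\<Sum>j\<in>{1..<l}. theta l H j)" by simp
    also have "(\<Sum>j\<in>{1..<l}. theta l H j) = (\<Sum>j\<in>{1..<l}. H j)"
      by (rule sum.cong) (auto simp: theta_def)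
    finally show ?thesis by (simp add: theta_def)
  qed
  have SI: "(\<forall>j<l. of_nat d * thw j \<in> \<int>) \<and> (\<Sum>j<l. thw j) = (\<Sum>j<l. theta l H j) \<and> bij w \<and> (\<forall>j\<ge>l. w j = j)"
    by (rule sact_inv[OF w_act theta_int])
  have phi_sum: "(\<Sum>j<l. phi l r j) = 0"
  proof -
    obtain k where k: "l = Suc k" using l_pos not0_implies_Suc by blast
    have "(\<Sum>j<l. r ((j + l - 1) mod l)) = r k + (\<Sum>j<k. r ((Suc j + l - 1) mod l))"
      unfolding k by (subst sum.lessThan_Suc_shift) simp
    also have "(\<Sum>j<k. r ((Suc j + l - 1) mod l)) = (\<Sum>j<k. r j)"
    proof (rule sum.cong)
      fix x assume "x \<in> {..<k}"
      hence "(Suc x + l - 1) mod l = x" unfolding k by simp (metis add_Suc_right mod_add_self2 mod_less less_SucI)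
      thus "r ((Suc x + l - 1) mod l) = r x" by simp
    qed simp
    finally have "(\<Sum>j<l. r ((j + l - 1) mod l)) = (\<Sum>j<l. r j)" unfolding k by simp
    thus ?thesis unfolding phi_def by (simp add: sum_subtractf)
  qed
  have eps_sum: "(\<Sum>j<l. eps j) = 1"
    unfolding eps_def using SI theta_sum phi_sum
    by (simp add: sum.distrib flip: of_int_sum)
  have eps_int: "\<And>j. j<l \<Longrightarrow> of_nat d * eps j \<in> \<int>"
    unfolding eps_def using SI by (simp add: algebra_simps)
  have eps_nn: "\<And>j. j<l \<Longrightarrow> 0 \<le> eps j" using eps_bounds eps_def by simp
  define m where "m p = (\<Sum>i\<le>p. eps i)" for p
  have m_int: "\<And>p. p<l \<Longrightarrow> of_nat d * m p \<in> \<int>"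
    unfolding m_def sum_distrib_left using eps_int by (intro Ints_sum) auto
  define tt where "tt p = \<lfloor>of_nat d * m p\<rfloor>" for p
  have tt_eq: "\<And>p. p<l \<Longrightarrow> of_nat d * m p = of_int (tt p)"
    unfolding tt_def using m_int by (metis Ints_cases floor_of_int)
  have m_mono: "\<And>p q. p \<le> q \<Longrightarrow> q < l \<Longrightarrow> m p \<le> m q"
    unfolding m_def by (rule sum_mono2) (auto intro: eps_nn)
  have m_last: "m (l-1) = 1"
  proof -
    have "{..l-1} = {..<l}" using l_pos by auto
    thus ?thesis unfolding m_def using eps_sum by simp
  qed
  have m_nn: "\<And>p. p<l \<Longrightarrow> 0 \<le> m p" unfolding m_def by (rule sum_nonneg) (auto intro: eps_nn)
  have tt_mono: "\<And>p q. p \<le> q \<Longrightarrow> q < l \<Longrightarrow> tt p \<le> tt q"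
    unfolding tt_def using m_mono by (intro floor_mono mult_left_mono) auto
  have tt_last: "tt (l-1) = int d" unfolding tt_def m_last by simp
  have tt_range: "\<And>p. p<l \<Longrightarrow> 0 \<le> tt p \<and> tt p \<le> int d"
  proof -
    fix p assume p: "p < l"
    have "tt p \<le> tt (l-1)" using p by (intro tt_mono) auto
    moreover have "0 \<le> tt p" unfolding tt_def using m_nn p by simp
    ultimately show "0 \<le> tt p \<and> tt p \<le> int d" using tt_last by simp
  qed
  have tt_step: "\<And>p. 1 \<le> p \<Longrightarrow> p < l \<Longrightarrow> (tt p = tt (p-1) \<longleftrightarrow> eps p = 0)"
  proof -
    fix p :: nat assume p: "1 \<le> p" "p < l"
    then obtain k where k: "p = Suc k" using not0_implies_Suc by fastforce
    have "m p = m (p-1) + eps p" unfolding m_def k by simp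
    hence "of_nat d * m p = of_nat d * m (p-1) + of_nat d * eps p" by (simp add: algebra_simps)
    hence "of_int (tt p) = (of_int (tt (p-1)) :: rat) + of_nat d * eps p" using tt_eq p by simp
    thus "tt p = tt (p-1) \<longleftrightarrow> eps p = 0" using d_pos
      by (metis add_cancel_left_right mult_eq_0_iff of_int_eq_iff of_nat_eq_0_iff not_gr0)
  qed
  have Iset_eq: "\<And>t. Iset l d eps t = {p. p<l \<and> tt p = int t}"
  proof -
    fix t
    have "\<And>p. p < l \<Longrightarrow> (of_nat d * (\<Sum>i\<le>p. eps i) = of_nat t) = (tt p = int t)"
      using tt_eq unfolding m_def by (metis of_int_eq_iff of_int_of_nat_eq)
    thus "Iset l d eps t = {p. p<l \<and> tt p = int t}" unfolding Iset_def by auto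
  qed
  define g where "g p = (if tt p = 0 then d else nat (tt p))" for p
  define sh where "sh p = (if tt p = 0 then -1 else 0::int)" for p
  define pos where "pos p = (if tt p = 0 then p + l else p)" for p
  define Grp where "Grp G = {p. p < l \<and> g p = G}" for G
  define TS where "TS F p = (\<lambda>x. x + sh p) ` range (F p)" for F :: "nat \<Rightarrow> nat \<Rightarrow> int" and p
  have fin_Grp: "\<And>G. finite (Grp G)" unfolding Grp_def by simp
  have pos_inj: "\<And>G. inj_on pos (Grp G)"
    by (rule inj_onI) (auto simp: pos_def Grp_def split: if_splits)
  have g_range: "1 \<le> g p \<and> g p \<le> d" if "p < l" for p
    unfolding g_def using tt_range[OF that] d_pos by (auto simp: le_nat_iff nat_le_iff)
  have Cb: "\<And>F t x. t \<le> d \<Longrightarrow> Cbracket l d eps F t x = card {p\<in>Grp (if t = 0 then d else t). x \<in> TS F p}"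
  proof -
    fix F t x assume t: "t \<le> d"
    show "Cbracket l d eps F t x = card {p\<in>Grp (if t = 0 then d else t). x \<in> TS F p}"
    proof (cases "1 \<le> t \<and> t \<le> d - 1")
      case True
      have "{p \<in> Iset l d eps t. x \<in> range (F p)} = {p\<in>Grp (if t = 0 then d else t). x \<in> TS F p}"
        using True tt_range unfolding Iset_eq Grp_def TS_def g_def sh_def
        by (auto split: if_splits)
      thus ?thesis using True unfolding Cbracket_def by simp
    next
      case False
      hence t0: "t = 0 \<or> t = d" using t by auto
      have sr: "\<And>f. range (shiftS (-1) f) = (\<lambda>x. x + -1) ` range f" unfolding shiftS_def by auto
      have "{p\<in>Grp (if t = 0 then d else t). x \<in> TS F p}
          = {p \<in> Iset l d eps 0. x \<in> range (shiftS (-1) (F p))} \<union> {p \<in> Iset l d eps d. x \<in> range (F p)}"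
        using t0 tt_range d_pos unfolding Iset_eq Grp_def TS_def g_def sh_def sr
        by (auto split: if_splits)
      moreover have "card ({p \<in> Iset l d eps 0. x \<in> range (shiftS (-1) (F p))} \<union> {p \<in> Iset l d eps d. x \<in> range (F p)})
          = card {p \<in> Iset l d eps 0. x \<in> range (shiftS (-1) (F p))} + card {p \<in> Iset l d eps d. x \<in> range (F p)}"
        by (rule card_Un_disjoint) (use d_pos in \<open>auto simp: Iset_eq\<close>)
      ultimately show ?thesis unfolding Cbracket_def if_not_P[OF False] by simp
    qed
  qed
  define conds where "conds F = ((\<forall>p\<in>Jset l eps. p \<noteq> 0 \<longrightarrow> range (F p) \<subseteq> range (F (p - 1)))
      \<and> (0 \<in> Iset l d eps 0 \<longrightarrow> range (shiftS (-1) (F 0)) \<subseteq> range (F (l - 1))))" for F :: "nat \<Rightarrow> nat \<Rightarrow> int"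
  define chain where "chain F = (\<forall>G. \<forall>p\<in>Grp G. \<forall>q\<in>Grp G. pos q \<le> pos p \<longrightarrow> TS F p \<subseteq> TS F q)" for F
  have sr: "\<And>f. range (shiftS (-1) f) = (\<lambda>x. x + -1) ` range f" unfolding shiftS_def by auto
  have tt_last0: "tt (l-1) \<noteq> 0" using tt_last d_pos by simp
  have pred: "\<exists>p'\<in>Grp G. pos p' + 1 = pos p \<and> TS F p \<subseteq> TS F p'"
    if cF: "conds F" and p: "p \<in> Grp G" and q: "q \<in> Grp G" and pq: "pos q < pos p" for F G p q
  proof (cases "tt p = 0")
    case False
    have pl: "p < l" "g p = G" using p by (auto simp: Grp_def)
    have ql: "q < l" "g q = G" using q by (auto simp: Grp_def)
    have tq: "tt q \<noteq> 0" using pq False pl ql by (auto simp: pos_def split: if_splits)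
    have qp: "q < p" using pq False tq by (simp add: pos_def)
    have eqt: "tt q = tt p" using pl ql False tq tt_range[OF pl(1)] tt_range[OF ql(1)]
      unfolding g_def by (simp split: if_splits) (metis eq_nat_nat_iff)
    have "tt q \<le> tt (p-1)" "tt (p-1) \<le> tt p" using qp pl by (auto intro!: tt_mono)
    hence e: "tt (p-1) = tt p" using eqt by simp
    hence ep: "eps p = 0" using tt_step[of p] qp pl by simp
    hence "p \<in> Jset l eps" using pl by (simp add: Jset_def)
    hence "range (F p) \<subseteq> range (F (p-1))" using cF qp unfolding conds_def by auto
    hence "TS F p \<subseteq> TS F (p-1)" unfolding TS_def sh_def e by auto
    moreover have "p - 1 \<in> Grp G" using pl e unfolding Grp_def g_def by auto
    moreover have "pos (p-1) + 1 = pos p" using e False qp by (simp add: pos_def)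
    ultimately show ?thesis by blast
  next
    case True
    have pl: "p < l" "g p = G" using p by (auto simp: Grp_def)
    show ?thesis
    proof (cases "p = 0")
      case False
      have "0 \<le> tt (p-1)" "tt (p-1) \<le> tt p" using pl tt_range by (auto intro!: tt_mono)
      hence e: "tt (p-1) = tt p" using True by simp
      hence ep: "eps p = 0" using tt_step[of p] False pl by simp
      hence "p \<in> Jset l eps" using pl by (simp add: Jset_def)
      hence "range (F p) \<subseteq> range (F (p-1))" using cF False unfolding conds_def by auto
      hence "TS F p \<subseteq> TS F (p-1)" unfolding TS_def sh_def e by auto
      moreover have "p - 1 \<in> Grp G" using pl e unfolding Grp_def g_def by auto
      moreover have "pos (p-1) + 1 = pos p" using e True False by (simp add: pos_def)
      ultimately show ?thesis by blast
    next
      case p0: True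
      have "0 \<in> Iset l d eps 0" using True p0 l_pos by (simp add: Iset_eq)
      hence "range (shiftS (-1) (F 0)) \<subseteq> range (F (l - 1))" using cF unfolding conds_def by auto
      hence "TS F p \<subseteq> TS F (l-1)" unfolding TS_def sh_def using True p0 tt_last0 sr by simp
      moreover have "l - 1 \<in> Grp G" using pl True tt_last l_pos unfolding Grp_def g_def by auto
      moreover have "pos (l-1) + 1 = pos p" using True p0 tt_last0 l_pos by (simp add: pos_def)
      ultimately show ?thesis by blast
    qed
  qed
  have c2ch: "chain F" if cF: "conds F" for F
  proof -
    have "\<forall>p q. p \<in> Grp G \<longrightarrow> q \<in> Grp G \<longrightarrow> pos p = pos q + k \<longrightarrow> TS F p \<subseteq> TS F q" for G k
    proof (induction k)
      case 0
      show ?case using pos_inj[of G] by (auto dest: inj_onD)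
    next
      case (Suc k)
      show ?case
      proof (intro allI impI)
        fix p q assume a: "p \<in> Grp G" "q \<in> Grp G" "pos p = pos q + Suc k"
        then obtain p' where p': "p' \<in> Grp G" "pos p' + 1 = pos p" "TS F p \<subseteq> TS F p'"
          using pred[OF cF a(1,2)] by auto
        have "TS F p' \<subseteq> TS F q" using Suc p' a by auto
        thus "TS F p \<subseteq> TS F q" using p' by blast
      qed
    qed
    thus ?thesis unfolding chain_def by (metis le_add_diff_inverse)
  qed
  have ch2c: "conds F" if chF: "chain F" for F
  proof -
    have sh_inj: "\<And>A B s. (\<lambda>x. x + s) ` A \<subseteq> (\<lambda>x::int. x + s) ` B \<Longrightarrow> A \<subseteq> B" by auto
    have "range (F p) \<subseteq> range (F (p - 1))" if p: "p \<in> Jset l eps" "p \<noteq> 0" for p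
    proof -
      have pl: "p < l" "eps p = 0" using p by (auto simp: Jset_def)
      hence e: "tt p = tt (p-1)" using tt_step[of p] p by simp
      have "p \<in> Grp (g p)" "p - 1 \<in> Grp (g p)" using pl e unfolding Grp_def g_def by auto
      moreover have "pos (p-1) \<le> pos p" using e by (simp add: pos_def)
      ultimately have "TS F p \<subseteq> TS F (p-1)" using chF unfolding chain_def by blast
      thus ?thesis unfolding TS_def sh_def e by (rule sh_inj)
    qed
    moreover have "range (shiftS (-1) (F 0)) \<subseteq> range (F (l - 1))" if z: "0 \<in> Iset l d eps 0"
    proof -
      have t0: "tt 0 = 0" using z by (simp add: Iset_eq)
      have "0 \<in> Grp d" "l - 1 \<in> Grp d" using t0 l_pos tt_last unfolding Grp_def g_def by auto
      moreover have "pos (l-1) \<le> pos 0" using t0 tt_last0 by (simp add: pos_def)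
      ultimately have "TS F 0 \<subseteq> TS F (l-1)" using chF unfolding chain_def by blast
      thus ?thesis unfolding TS_def sh_def using t0 tt_last0 sr by simp
    qed
    ultimately show ?thesis unfolding conds_def by blast
  qed
  have sh_eq: "\<And>A B s. (\<lambda>x. x + s) ` A = (\<lambda>x::int. x + s) ` B \<Longrightarrow> A = B"
  proof -
    fix A B :: "int set" and s :: int
    assume "(\<lambda>x. x + s) ` A = (\<lambda>x. x + s) ` B"
    moreover have "inj (\<lambda>x::int. x + s)" by (simp add: inj_def)
    ultimately show "A = B" by (simp add: inj_image_eq_iff)
  qed
  have Cb_g: "Cbracket l d eps F (g p) x = card {q\<in>Grp (g p). x \<in> TS F q}" if "p<l" for F p x
    using Cb[of "g p" F x] g_range[OF that] by simp
  define P where "P Ct = (length Ct = l \<and> (\<forall>p<l. strict_decr (Ct ! p))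
              \<and> (\<forall>t\<le>d. Cbracket l d eps (\<lambda>p. Ct ! p) t = Cbracket l d eps C t)
              \<and> conds (\<lambda>p. Ct ! p))" for Ct :: "(nat \<Rightarrow> int) list"
  have goal_eq: "?thesis = (\<exists>!Ct. P Ct)" unfolding P_def conds_def eps_def C_def Let_def by simp
  have uniqT: "TS (\<lambda>p. Ct ! p) p = {x. card {q\<in>Grp (g p). pos q \<le> pos p} \<le> card {q\<in>Grp (g p). x \<in> TS C q}}"
    if PC: "P Ct" and p: "p < l" for Ct p
  proof -
    have ch: "chain (\<lambda>p. Ct ! p)" using PC c2ch unfolding P_def by blast
    have pG: "p \<in> Grp (g p)" using p by (simp add: Grp_def)
    have "TS (\<lambda>p. Ct ! p) p = {x. card {q\<in>Grp (g p). pos q \<le> pos p} \<le> card {q\<in>Grp (g p). x \<in> TS (\<lambda>p. Ct ! p) q}}"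
      by (rule chain_char[OF fin_Grp pos_inj pG]) (use ch in \<open>auto simp: chain_def\<close>)
    also have "\<dots> = {x. card {q\<in>Grp (g p). pos q \<le> pos p} \<le> card {q\<in>Grp (g p). x \<in> TS C q}}"
    proof -
      have "Cbracket l d eps (\<lambda>p. Ct ! p) (g p) = Cbracket l d eps C (g p)"
        using PC g_range[OF p] unfolding P_def by blast
      hence "\<And>x. card {q\<in>Grp (g p). x \<in> TS (\<lambda>p. Ct ! p) q} = card {q\<in>Grp (g p). x \<in> TS C q}"
        using Cb_g[OF p] by metis
      thus ?thesis by simp
    qed
    finally show ?thesis .
  qed
  have uniq: "Ct1 = Ct2" if P1: "P Ct1" and P2: "P Ct2" for Ct1 Ct2
  proof (rule nth_equalityI)
    show "length Ct1 = length Ct2" using P1 P2 by (simp add: P_def)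
    fix p assume "p < length Ct1"
    hence p: "p < l" using P1 by (simp add: P_def)
    have "TS (\<lambda>p. Ct1 ! p) p = TS (\<lambda>p. Ct2 ! p) p" using uniqT[OF P1 p] uniqT[OF P2 p] by simp
    hence "range (Ct1 ! p) = range (Ct2 ! p)" unfolding TS_def by (rule sh_eq)
    moreover have "strict_decr (Ct1 ! p)" "strict_decr (Ct2 ! p)" using P1 P2 p by (auto simp: P_def)
    ultimately show "Ct1 ! p = Ct2 ! p" using sd_unique by blast
  qed
  define M where "M G x = card {q\<in>Grp G. x \<in> TS C q}" for G x
  define rk where "rk p = card {q\<in>Grp (g p). pos q \<le> pos p}" for p
  define Tn where "Tn p = {x. rk p \<le> M (g p) x}" for p
  define R where "R p = (\<lambda>x. x - sh p) ` Tn p" for p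
  have inv_l: "inv w q < l" if q: "q < l" for q
  proof -
    have "w (inv w q) = q" using SI by (meson bij_inv_eq_iff)
    thus "inv w q < l" using SI q by (metis not_le)
  qed
  have partq: "\<And>q. q < l \<Longrightarrow> is_partition (la (inv w q))" using la_mp inv_l by (simp add: multipartition_def)
  define B where "B = (\<Sum>q'<l. int (la (inv w q') 0) + \<bar>r q'\<bar>)"
  have Bb: "C q i \<le> B" if q: "q < l" for q i
  proof -
    have "C q i \<le> int (la (inv w q) 0) + \<bar>r q\<bar>" unfolding C_def beta_def using part_le0[OF partq[OF q], of i] by simp
    also have "\<dots> \<le> B" unfolding B_def
      by (rule member_le_sum[where f="\<lambda>q'. int (la (inv w q') 0) + \<bar>r q'\<bar>"]) (use q in auto)
    finally show ?thesis .
  qed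
  have "\<forall>q<l. \<exists>N. \<forall>i\<ge>N. la (inv w q) i = 0" using part_ev0 partq by blast
  then obtain Nf where Nf: "\<And>q i. q < l \<Longrightarrow> Nf q \<le> i \<Longrightarrow> la (inv w q) i = 0" by metis
  define L where "L = - (\<Sum>q<l. int (Nf q) + \<bar>r q\<bar>)"
  have low: "x \<in> range (C q)" if "q < l" "x \<le> L" for q x
  proof -
    have "int (Nf q) + \<bar>r q\<bar> \<le> (\<Sum>q'<l. int (Nf q') + \<bar>r q'\<bar>)"
      by (rule member_le_sum[where f="\<lambda>q'. int (Nf q') + \<bar>r q'\<bar>"]) (use that in auto)
    hence ge: "int (Nf q) \<le> r q - x" using that unfolding L_def by simp
    have "C q (nat (r q - x)) = x" unfolding C_def beta_def using Nf[OF that(1), of "nat (r q - x)"] ge by simp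
    thus ?thesis by (metis rangeI)
  qed
  have TS_up: "y \<le> B" if q: "q < l" and y: "y \<in> TS C q" for q y
  proof -
    obtain i where "y = C q i + sh q" using y unfolding TS_def by auto
    moreover have "sh q \<le> 0" by (simp add: sh_def)
    ultimately show ?thesis using Bb[OF q, of i] by linarith
  qed
  have TS_low: "y \<in> TS C q" if q: "q < l" and y: "y \<le> L - 1" for q y
  proof -
    have "y - sh q \<in> range (C q)" using low[OF q] y unfolding sh_def by simp
    thus "y \<in> TS C q" unfolding TS_def by (force intro: image_eqI[where x="y - sh q"])
  qed
  have rk_le: "rk p \<le> card (Grp (g p))" for p
    unfolding rk_def by (rule card_mono[OF fin_Grp]) auto
  have rk_pos: "1 \<le> rk p" if "p < l" for p
  proof -
    have "p \<in> {q\<in>Grp (g p). pos q \<le> pos p}" using that by (simp add: Grp_def)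
    hence "{q\<in>Grp (g p). pos q \<le> pos p} \<noteq> {}" by blast
    thus ?thesis unfolding rk_def using fin_Grp by (simp add: Suc_le_eq card_gt_0_iff)
  qed
  have Tn_up: "y \<le> B" if p: "p < l" and y: "y \<in> Tn p" for p y
  proof -
    have "1 \<le> M (g p) y" using rk_pos[OF p] y unfolding Tn_def by simp
    hence "{q\<in>Grp (g p). y \<in> TS C q} \<noteq> {}" unfolding M_def by (metis card.empty not_one_le_zero)
    then obtain q where "q \<in> Grp (g p)" "y \<in> TS C q" by blast
    thus ?thesis using TS_up by (auto simp: Grp_def)
  qed
  have Tn_low: "{..L-1} \<subseteq> Tn p" if p: "p < l" for p
  proof
    fix y assume "y \<in> {..L-1}"
    hence "{q\<in>Grp (g p). y \<in> TS C q} = Grp (g p)" using TS_low by (auto simp: Grp_def)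
    thus "y \<in> Tn p" unfolding Tn_def M_def using rk_le by simp
  qed
  have "\<forall>p<l. \<exists>A. strict_decr A \<and> range A = R p"
  proof (intro allI impI)
    fix p assume p: "p < l"
    have "infinite (Tn p)" using Tn_low[OF p] infinite_Iic finite_subset by blast
    moreover have "inj_on (\<lambda>x. x - sh p) (Tn p)" by (simp add: inj_on_def)
    ultimately have "infinite (R p)" unfolding R_def using finite_imageD by blast
    moreover have "\<forall>x\<in>R p. x \<le> B + 1" unfolding R_def sh_def using Tn_up[OF p] by fastforce
    ultimately show "\<exists>A. strict_decr A \<and> range A = R p" by (rule sd_exists)
  qed
  then obtain Af where Af: "\<And>p. p < l \<Longrightarrow> strict_decr (Af p) \<and> range (Af p) = R p" by metis
  define Ct where "Ct = map Af [0..<l]"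
  have Ctn: "\<And>p. p < l \<Longrightarrow> Ct ! p = Af p" unfolding Ct_def by simp
  have TSn: "TS (\<lambda>p. Ct ! p) p = Tn p" if p: "p < l" for p
    unfolding TS_def Ctn[OF p] using Af[OF p] unfolding R_def by (auto simp: image_image)
  have chn: "chain (\<lambda>p. Ct ! p)" unfolding chain_def
  proof (intro allI ballI impI)
    fix G p q assume pq: "p \<in> Grp G" "q \<in> Grp G" "pos q \<le> pos p"
    have gg: "g p = G" "g q = G" "p < l" "q < l" using pq by (auto simp: Grp_def)
    have "rk q \<le> rk p" unfolding rk_def gg by (rule card_mono) (use pq fin_Grp in auto)
    thus "TS (\<lambda>p. Ct ! p) p \<subseteq> TS (\<lambda>p. Ct ! p) q" using TSn gg unfolding Tn_def by auto
  qed
  have "P Ct"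
    unfolding P_def
  proof (intro conjI allI impI)
    show "length Ct = l" by (simp add: Ct_def)
    show "\<And>p. p < l \<Longrightarrow> strict_decr (Ct ! p)" using Af Ctn by simp
    show "conds (\<lambda>p. Ct ! p)" by (rule ch2c[OF chn])
    fix t assume t: "t \<le> d"
    define G where "G = (if t = 0 then d else t)"
    show "Cbracket l d eps (\<lambda>p. Ct ! p) t = Cbracket l d eps C t"
    proof
      fix x
      have "{p\<in>Grp G. x \<in> TS (\<lambda>p. Ct ! p) p} = {p\<in>Grp G. card {q\<in>Grp G. pos q \<le> pos p} \<le> M G x}"
        using TSn unfolding Tn_def rk_def Grp_def by auto
      moreover have "card {p\<in>Grp G. card {q\<in>Grp G. pos q \<le> pos p} \<le> M G x} = M G x"
        by (rule rank_count[OF fin_Grp pos_inj]) (unfold M_def, rule card_mono[OF fin_Grp], auto)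
      ultimately show "Cbracket l d eps (\<lambda>p. Ct ! p) t x = Cbracket l d eps C t x"
        using Cb[OF t] unfolding G_def M_def by simp
    qed
  qed
  thus ?thesis unfolding goal_eq using uniq by blast
qed

end
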